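(* For every set $V \subset \mathcal{A}_0$ we have $$V^* = \overline{(\mathrm{cm}(V))^T},$$ where the closure is taken in the space $\mathcal{A}$ (topology of locally uniform convergence in $D$).
   Context: $D=\{z:|z|<1\}$, $\overline D$ its closure. $\mathcal{A}$ is the space of functions $f(z)=\sum_{k\ge0}a_k(f)z^k$ analytic in $D$, with the topology of locally uniform convergence; $\mathcal{A}_0=\{f\in\mathcal{A}: a_0(f)=1\}$. $\mathcal{A}(\overline D)$ is the set of functions analytic in some disk $\{|z|<R\}$ with $R>1$, and $\mathcal{A}_0(\overline D)=\{g\in\mathcal{A}(\overline D):a_0(g)=1\}$. The Hadamard product is $(f*g)(z)=\sum_{k\ge0}a_k(f)a_k(g)z^k$. For $V\subset\mathcal{A}_0$, the dual is $V^*=\{g\in\mathcal{A}_0:(f*g)(z)\ne0 \text{ for all } z\in D,\ f\in V\}$. For $x\in\overline D$, $(P_xf)(z)=f(xz)$, and the complete hull is $\mathrm{cm}(V)=\{P_xf: f\in V,\ x\in\overline D\}$. For $V\subset\mathcal{A}_0$, $V^T=\{g\in\mathcal{A}_0(\overline D): (f*g)(1)\ne0 \text{ for all } f\in V\}$. *)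

theory Defs
  imports "HOL-Analysis.Analysis" "HOL-Analysis.FPS_Convergence"
begin

text \<open>An analytic function on the unit disk D is represented by its Taylor series at 0,
  i.e. a formal power series with radius of convergence at least 1; its value at z is
  eval_fps f z. The k-th coefficient a_k(f) is fps_nth f k.\<close>

definition A_space :: "complex fps set" where
  "A_space = {f. fps_conv_radius f \<ge> 1}"

definition A0_space :: "complex fps set" where
  "A0_space = {f \<in> A_space. fps_nth f 0 = 1}"

definition AD_space :: "complex fps set" where
  "AD_space = {g. fps_conv_radius g > 1}"

definition AD0_space :: "complex fps set" where
  "AD0_space = {g \<in> AD_space. fps_nth g 0 = 1}"

definition hadamard :: "complex fps \<Rightarrow> complex fps \<Rightarrow> complex fps" where
  "hadamard f g = Abs_fps (\<lambda>k. fps_nth f k * fps_nth g k)"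

definition dual :: "complex fps set \<Rightarrow> complex fps set" where
  "dual V = {g \<in> A0_space. \<forall>f\<in>V. \<forall>z\<in>ball 0 1. eval_fps (hadamard f g) z \<noteq> 0}"

text \<open>(P_x f)(z) = f(x z).\<close>
definition Pop :: "complex \<Rightarrow> complex fps \<Rightarrow> complex fps" where
  "Pop x f = Abs_fps (\<lambda>k. x ^ k * fps_nth f k)"

definition cm :: "complex fps set \<Rightarrow> complex fps set" where
  "cm V = {Pop x f | x f. f \<in> V \<and> x \<in> cball 0 1}"

definition Tdual :: "complex fps set \<Rightarrow> complex fps set" where
  "Tdual V = {g \<in> AD0_space. \<forall>f\<in>V. eval_fps (hadamard f g) 1 \<noteq> 0}"

definition lu_closure :: "complex fps set \<Rightarrow> complex fps set" where
  "lu_closure S = {g \<in> A_space. \<forall>K. compact K \<and> K \<subseteq> ball 0 1 \<longrightarrow>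
      (\<forall>e>0. \<exists>h\<in>S. \<forall>z\<in>K. norm (eval_fps h z - eval_fps g z) < e)}"

end

theory Submission
  imports Defs "HOL-Complex_Analysis.Complex_Analysis"
begin
lemma hadamard_nth[simp]: "fps_nth (hadamard f g) k = fps_nth f k * fps_nth g k"
  by (simp add: hadamard_def)
lemma Pop_nth[simp]: "fps_nth (Pop x f) k = x ^ k * fps_nth f k"
  by (simp add: Pop_def)
lemma summable_mult_nonneg:
  fixes a b :: "nat \<Rightarrow> real"
  assumes "summable a" "summable b" "\<And>k. a k \<ge> 0" "\<And>k. b k \<ge> 0"
  shows "summable (\<lambda>k. a k * b k)"
proof -
  have "b \<longlonglongrightarrow> 0" using assms(2) summable_LIMSEQ_zero by blast
  then have "eventually (\<lambda>k. dist (b k) 0 < 1) sequentially" by (rule tendstoD) simp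
  then have ev: "eventually (\<lambda>k. norm (a k * b k) \<le> a k) sequentially"
    by eventually_elim (use assms(3,4) in \<open>auto intro: mult_left_le\<close>)
  show ?thesis by (rule summable_comparison_test_ev[OF ev assms(1)])
qed
lemma hadamard_radius:
  assumes "fps_conv_radius f \<ge> 1" "fps_conv_radius g \<ge> 1"
  shows "fps_conv_radius (hadamard f g) \<ge> 1"
  unfolding fps_conv_radius_def
proof (rule conv_radius_geI_ex')
  fix r :: real assume r: "0 < r" "ereal r < 1"
  have r1: "r < 1" using r by simp
  define q where "q = sqrt r"
  have q: "0 < q" "q < 1" using r r1 by (auto simp: q_def)
  have qq: "q * q = r" using r by (simp add: q_def)
  have lt: "ereal (norm (complex_of_real q)) < 1" using q by simp
  have s1: "summable (\<lambda>n. norm (fps_nth f n * complex_of_real q ^ n))"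
    by (rule abs_summable_in_conv_radius) (use less_le_trans[OF lt assms(1)] in \<open>auto simp: fps_conv_radius_def\<close>)
  have s2: "summable (\<lambda>n. norm (fps_nth g n * complex_of_real q ^ n))"
    by (rule abs_summable_in_conv_radius) (use less_le_trans[OF lt assms(2)] in \<open>auto simp: fps_conv_radius_def\<close>)
  have "summable (\<lambda>n. norm (fps_nth f n * complex_of_real q ^ n) * norm (fps_nth g n * complex_of_real q ^ n))"
    by (rule summable_mult_nonneg[OF s1 s2]) auto
  moreover have "norm (fps_nth f n * complex_of_real q ^ n) * norm (fps_nth g n * complex_of_real q ^ n)
     = norm (fps_nth (hadamard f g) n * complex_of_real r ^ n)" for n
    by (simp add: norm_mult norm_power qq[symmetric] power_mult_distrib mult_ac)
  ultimately have "summable (\<lambda>n. norm (fps_nth (hadamard f g) n * complex_of_real r ^ n))" by simp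
  then show "summable (\<lambda>n. fps_nth (hadamard f g) n * complex_of_real r ^ n)"
    by (rule summable_norm_cancel)
qed
lemma Pop_radius:
  assumes "fps_conv_radius g \<ge> 1" "0 < r" "r < 1"
  shows "fps_conv_radius (Pop (complex_of_real r) g) > 1"
proof -
  define z where "z = 1 / sqrt r"
  have z1: "z > 1" using assms by (simp add: z_def)
  have "r * z = sqrt r" using assms by (simp add: z_def real_div_sqrt)
  then have rz: "r * z < 1" using assms by simp
  have "norm (complex_of_real (r * z)) < 1" using rz assms z1 by (simp only: norm_of_real) simp
  then have "ereal (norm (complex_of_real (r * z))) < 1" by simp
  also have "1 \<le> conv_radius (fps_nth g)" using assms(1) by (simp add: fps_conv_radius_def)
  finally have "summable (\<lambda>n. fps_nth g n * complex_of_real (r*z) ^ n)"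
    by (rule summable_in_conv_radius)
  then have "summable (\<lambda>n. fps_nth (Pop (complex_of_real r) g) n * complex_of_real z ^ n)"
    by (simp add: power_mult_distrib mult_ac)
  then have "conv_radius (fps_nth (Pop (complex_of_real r) g)) \<ge> norm (complex_of_real z)"
    by (rule conv_radius_geI)
  moreover have "(1::ereal) < ereal (norm (complex_of_real z))" using z1 by simp
  ultimately show ?thesis unfolding fps_conv_radius_def by (rule order.strict_trans2[rotated])
qed
lemma coeff_bound:
  fixes d :: "complex fps"
  assumes "fps_conv_radius d \<ge> 1" "0 < \<rho>" "\<rho> < 1"
    and B: "\<And>w. norm w = \<rho> \<Longrightarrow> norm (eval_fps d w) \<le> B"
  shows "norm (fps_nth d k) \<le> B / \<rho> ^ k"
proof -
  have sub: "cball (0::complex) \<rho> \<subseteq> eball 0 (fps_conv_radius d)"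
  proof (rule subsetI)
    fix x :: complex assume "x \<in> cball 0 \<rho>"
    then have "ereal (norm x) < 1" using assms by simp
    then have "ereal (norm x) < fps_conv_radius d" using less_le_trans[OF _ assms(1)] by blast
    then show "x \<in> eball 0 (fps_conv_radius d)" by simp
  qed
  have pos: "fps_conv_radius d > 0" using less_le_trans[OF _ assms(1), of 0] by simp
  have "fps_nth d k = (deriv ^^ k) (eval_fps d) 0 / fact k"
    by (rule fps_nth_fps_expansion[OF eval_fps_has_fps_expansion[OF pos]])
  moreover have "norm ((deriv ^^ k) (eval_fps d) 0) \<le> fact k * B / \<rho> ^ k"
  proof (rule Cauchy_inequality)
    show "eval_fps d holomorphic_on ball 0 \<rho>"
      by (rule holomorphic_on_eval_fps) (use sub in auto)
    show "continuous_on (cball 0 \<rho>) (eval_fps d)"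
      by (rule holomorphic_on_imp_continuous_on, rule holomorphic_on_eval_fps[OF sub])
  qed (use assms B in auto)
  ultimately have D: "norm ((deriv ^^ k) (eval_fps d) 0) \<le> fact k * B / \<rho> ^ k"
    and E: "norm (fps_nth d k) = norm ((deriv ^^ k) (eval_fps d) 0) / fact k"
    by (simp_all add: norm_divide)
  note E
  also have "\<dots> \<le> (fact k * B / \<rho> ^ k) / fact k"
    by (rule divide_right_mono[OF D]) simp
  also have "\<dots> = B / \<rho> ^ k" by simp
  finally show ?thesis .
qed

lemma compact_in_disc:
  fixes K :: "complex set"
  assumes "compact K" "K \<subseteq> ball 0 1"
  obtains s where "0 \<le> s" "s < 1" "K \<subseteq> cball 0 s"
proof (cases "K = {}")
  case True then show ?thesis using that[of 0] by auto
next
  case False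
  have "compact (norm ` K)" by (rule compact_continuous_image) (auto intro: continuous_intros assms)
  then obtain m where "m \<in> norm ` K" "\<forall>t\<in>norm ` K. t \<le> m"
    using compact_attains_sup[of "norm ` K"] False by auto
  then show ?thesis using that[of m] assms(2) by (fastforce simp: subset_iff)
qed
lemma unif_conv:
  fixes f g :: "complex fps" and H :: "nat \<Rightarrow> complex fps"
  assumes rf: "fps_conv_radius f \<ge> 1" and rg: "fps_conv_radius g \<ge> 1"
    and rH: "\<And>n. fps_conv_radius (H n) \<ge> 1"
    and appr: "\<And>n z. z \<in> cball 0 (1 - 1/(real n+2)) \<Longrightarrow>
                 norm (eval_fps (H n) z - eval_fps g z) < 1/(real n+1)"
    and K: "compact K" "K \<subseteq> ball 0 1"
  shows "uniform_limit K (\<lambda>n. eval_fps (hadamard f (H n))) (eval_fps (hadamard f g)) sequentially"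
proof -
  obtain s where s: "0 \<le> s" "s < 1" "K \<subseteq> cball 0 s" using compact_in_disc[OF K] by blast
  define \<rho>0 where "\<rho>0 = (1+s)/2"
  define q where "q = s/\<rho>0"
  have \<rho>0: "0 < \<rho>0" "\<rho>0 < 1" "s \<le> \<rho>0" using s by (auto simp: \<rho>0_def)
  have q: "0 \<le> q" "q < 1" using s \<rho>0 by (auto simp: q_def field_simps \<rho>0_def)
  have "ereal (norm (complex_of_real q)) < 1" using q by simp
  then have "ereal (norm (complex_of_real q)) < conv_radius (fps_nth f)"
    using less_le_trans[OF _ rf] by (simp add: fps_conv_radius_def)
  from abs_summable_in_conv_radius[OF this]
  have sumC: "summable (\<lambda>k. norm (fps_nth f k) * q^k)"
    using q by (simp add: norm_mult norm_power)
  define C where "C = (\<Sum>k. norm (fps_nth f k) * q^k)"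
  have C0: "C \<ge> 0" unfolding C_def by (rule suminf_nonneg[OF sumC]) (use q in auto)
  obtain N :: nat where N: "2/(1-s) \<le> real N" using real_arch_simple by blast
  have key: "norm (eval_fps (hadamard f (H n)) w - eval_fps (hadamard f g) w) \<le> C / (real n + 1)"
    if n: "n \<ge> N" and w: "w \<in> K" for n w
  proof -
    define \<rho> where "\<rho> = 1 - 1/(real n+2)"
    have "2/(1-s) \<le> real n + 2" using N n by linarith
    then have "2 \<le> (real n + 2) * (1 - s)" using s by (simp add: field_simps)
    then have "1/(real n+2) \<le> (1-s)/2" by (simp add: field_simps)
    then have \<rho>\<rho>0: "\<rho>0 \<le> \<rho>" by (simp add: \<rho>_def \<rho>0_def field_simps)
    have \<rho>: "0 < \<rho>" "\<rho> < 1" using \<rho>\<rho>0 \<rho>0 by (auto simp: \<rho>_def)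
    define d where "d = H n - g"
    have rd: "fps_conv_radius d \<ge> 1"
      using fps_conv_radius_diff[of "H n" g] rH[of n] rg unfolding d_def
      by (meson min.bounded_iff order_trans)
    have bd: "norm (fps_nth d k) \<le> (1/(real n+1)) / \<rho>^k" for k
    proof (rule coeff_bound[OF rd \<rho>])
      fix w' :: complex assume w': "norm w' = \<rho>"
      have "ereal (norm w') < 1" using w' \<rho> by simp
      then have l1: "ereal (norm w') < fps_conv_radius (H n)" "ereal (norm w') < fps_conv_radius g"
        using less_le_trans[OF _ rH[of n]] less_le_trans[OF _ rg] by auto
      have "eval_fps d w' = eval_fps (H n) w' - eval_fps g w'"
        unfolding d_def by (rule eval_fps_diff[OF l1])
      moreover have "norm (eval_fps (H n) w' - eval_fps g w') < 1/(real n+1)"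
        by (rule appr) (use w' \<rho>_def in simp)
      ultimately show "norm (eval_fps d w') \<le> 1/(real n+1)" by simp
    qed
    have nw: "norm w \<le> s" using w s by auto
    have nw1: "ereal (norm w) < 1" using nw s by simp
    have s1: "summable (\<lambda>k. fps_nth (hadamard f (H n)) k * w^k)"
      by (rule summable_fps) (use less_le_trans[OF nw1 hadamard_radius[OF rf rH[of n]]] in simp)
    have s2: "summable (\<lambda>k. fps_nth (hadamard f g) k * w^k)"
      by (rule summable_fps) (use less_le_trans[OF nw1 hadamard_radius[OF rf rg]] in simp)
    define X where "X = (\<lambda>k. fps_nth f k * fps_nth d k * w^k)"
    have "(\<Sum>k. X k) = (\<Sum>k. fps_nth (hadamard f (H n)) k * w^k - fps_nth (hadamard f g) k * w^k)"
      unfolding X_def d_def by (simp add: algebra_simps)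
    also have "\<dots> = eval_fps (hadamard f (H n)) w - eval_fps (hadamard f g) w"
      unfolding eval_fps_def by (rule suminf_diff[OF s1 s2, symmetric])
    finally have eq: "eval_fps (hadamard f (H n)) w - eval_fps (hadamard f g) w = (\<Sum>k. X k)" ..
    have trm: "norm (X k) \<le> (1/(real n+1)) * (norm (fps_nth f k) * q^k)" for k
    proof -
      have "norm w / \<rho> \<le> s / \<rho>" using nw \<rho> by (simp add: divide_right_mono)
      also have "\<dots> \<le> s / \<rho>0" using s \<rho>0 \<rho>\<rho>0 by (simp add: divide_left_mono)
      finally have "(norm w / \<rho>)^k \<le> q^k" unfolding q_def by (rule power_mono) (use \<rho> in simp)
      then have A: "norm w ^ k / \<rho>^k \<le> q^k" by (simp add: power_divide)
      have "norm (X k) = norm (fps_nth f k) * norm (fps_nth d k) * norm w ^ k"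
        by (simp add: X_def norm_mult norm_power)
      also have "\<dots> \<le> norm (fps_nth f k) * ((1/(real n+1)) / \<rho>^k) * norm w ^ k"
        by (intro mult_right_mono mult_left_mono bd) auto
      also have "\<dots> = (1/(real n+1)) * norm (fps_nth f k) * (norm w ^ k / \<rho>^k)" by simp
      also have "\<dots> \<le> (1/(real n+1)) * norm (fps_nth f k) * q^k"
        by (intro mult_left_mono A) auto
      finally show ?thesis by simp
    qed
    have sumY: "summable (\<lambda>k. (1/(real n+1)) * (norm (fps_nth f k) * q^k))"
      by (rule summable_mult[OF sumC])
    have sX: "summable (\<lambda>k. norm (X k))"
      by (rule summable_comparison_test[OF _ sumY]) (use trm in auto)
    have "norm (\<Sum>k. X k) \<le> (\<Sum>k. norm (X k))" by (rule summable_norm[OF sX])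
    also have "\<dots> \<le> (\<Sum>k. (1/(real n+1)) * (norm (fps_nth f k) * q^k))"
      by (rule suminf_le[OF trm sX sumY])
    also have "\<dots> = (1/(real n+1)) * C" unfolding C_def by (rule suminf_mult[OF sumC])
    finally show ?thesis using eq by simp
  qed
  show ?thesis
  proof (rule uniform_limitI)
    fix e :: real assume e: "e > 0"
    obtain M :: nat where M: "C/e < real M" using reals_Archimedean2 by blast
    show "\<forall>\<^sub>F n in sequentially. \<forall>x\<in>K. dist (eval_fps (hadamard f (H n)) x) (eval_fps (hadamard f g) x) < e"
      unfolding eventually_sequentially
    proof (intro exI allI impI ballI)
      fix n x assume n: "max N M \<le> n" and x: "x \<in> K"
      have "C < e * real M" using M e by (simp add: field_simps)
      also have "\<dots> \<le> e * real n" using n e by simp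
      also have "\<dots> < e * (real n + 1)" using e by simp
      finally have "C / (real n + 1) < e" by (simp add: field_simps)
      then show "dist (eval_fps (hadamard f (H n)) x) (eval_fps (hadamard f g) x) < e"
        using key[OF _ x, of n] n by (simp add: dist_norm)
    qed
  qed
qed
lemma Tdual_prop:
  assumes "h \<in> Tdual (cm V)"
  shows "fps_conv_radius h \<ge> 1" "fps_nth h 0 = 1"
    "\<And>f z. f \<in> V \<Longrightarrow> z \<in> ball 0 1 \<Longrightarrow> eval_fps (hadamard f h) z \<noteq> 0"
proof -
  show "fps_conv_radius h \<ge> 1" "fps_nth h 0 = 1"
    using assms by (auto simp: Tdual_def AD0_space_def AD_space_def)
  fix f z assume f: "f \<in> V" and z: "z \<in> ball (0::complex) 1"
  have "Pop z f \<in> cm V" using f z unfolding cm_def by (auto intro!: exI[of _ z] less_imp_le)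
  then have "eval_fps (hadamard (Pop z f) h) 1 \<noteq> 0" using assms by (auto simp: Tdual_def)
  moreover have "eval_fps (hadamard (Pop z f) h) 1 = eval_fps (hadamard f h) z"
    unfolding eval_fps_def by (simp add: mult_ac)
  ultimately show "eval_fps (hadamard f h) z \<noteq> 0" by simp
qed

theorem theorem1:
  assumes "V \<subseteq> A0_space"
  shows "dual V = lu_closure (Tdual (cm V))"
proof
  show "dual V \<subseteq> lu_closure (Tdual (cm V))"
  proof
    fix g assume g: "g \<in> dual V"
    then have gA: "fps_conv_radius g \<ge> 1" and g0: "fps_nth g 0 = 1"
      and gnz: "\<And>f z. f \<in> V \<Longrightarrow> z \<in> ball 0 1 \<Longrightarrow> eval_fps (hadamard f g) z \<noteq> 0"
      by (auto simp: dual_def A0_space_def A_space_def)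
    show "g \<in> lu_closure (Tdual (cm V))"
      unfolding lu_closure_def
    proof (intro CollectI conjI allI impI)
      show "g \<in> A_space" using gA by (simp add: A_space_def)
      fix K :: "complex set" and e :: real
      assume K: "compact K \<and> K \<subseteq> ball 0 1" and e: "0 < e"
      obtain s where s: "0 \<le> s" "s < 1" "K \<subseteq> cball 0 s" using compact_in_disc K by blast
      have sub: "cball (0::complex) s \<subseteq> eball 0 (fps_conv_radius g)"
      proof (rule subsetI)
        fix x :: complex assume "x \<in> cball 0 s"
        then have "ereal (norm x) < 1" using s by simp
        then have "ereal (norm x) < fps_conv_radius g" using less_le_trans[OF _ gA] by blast
        then show "x \<in> eball 0 (fps_conv_radius g)" by simp
      qed
      have cont: "continuous_on (cball 0 s) (eval_fps g)"
        by (rule holomorphic_on_imp_continuous_on, rule holomorphic_on_eval_fps[OF sub])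
      then have "uniformly_continuous_on (cball 0 s) (eval_fps g)"
        by (rule compact_uniformly_continuous) simp
      then obtain \<delta> where \<delta>: "\<delta> > 0"
        "\<And>x x'. x \<in> cball 0 s \<Longrightarrow> x' \<in> cball 0 s \<Longrightarrow> dist x' x < \<delta> \<Longrightarrow>
            dist (eval_fps g x') (eval_fps g x) < e"
        unfolding uniformly_continuous_on_def using e by metis
      define r where "r = max (1/2) (1 - \<delta>/2)"
      have r: "0 < r" "r < 1" "1 - r < \<delta>" using \<delta> by (auto simp: r_def)
      define h where "h = Pop (complex_of_real r) g"
      have evh: "eval_fps h z = eval_fps g (complex_of_real r * z)" for z
        unfolding h_def eval_fps_def by (simp add: power_mult_distrib mult_ac)
      show "\<exists>h\<in>Tdual (cm V). \<forall>z\<in>K. norm (eval_fps h z - eval_fps g z) < e"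
      proof (intro bexI ballI)
        fix z assume z: "z \<in> K"
        then have zs: "norm z \<le> s" using s by auto
        have "dist (complex_of_real r * z) z = norm ((complex_of_real r - 1) * z)"
          by (simp add: dist_norm algebra_simps)
        also have "\<dots> = norm (complex_of_real (r - 1)) * norm z" by (simp add: norm_mult)
        also have "\<dots> = (1 - r) * norm z" using r by (simp only: norm_of_real) simp
        also have "\<dots> \<le> 1 - r" using zs s r by (simp add: mult_left_le)
        finally have d1: "dist (complex_of_real r * z) z < \<delta>" using r by simp
        have "norm (complex_of_real r * z) = r * norm z" using r by (simp add: norm_mult)
        also have "\<dots> \<le> norm z" using r by (simp add: mult_left_le_one_le)
        finally have "complex_of_real r * z \<in> cball 0 s" using zs by simp
        moreover have "z \<in> cball 0 s" using zs by simp
        ultimately have "dist (eval_fps g (complex_of_real r * z)) (eval_fps g z) < e"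
          using \<delta>(2) d1 by blast
        then show "norm (eval_fps h z - eval_fps g z) < e" by (simp add: evh dist_norm)
      next
        have hr: "fps_conv_radius h > 1" unfolding h_def by (rule Pop_radius[OF gA r(1,2)])
        have h0: "fps_nth h 0 = 1" by (simp add: h_def g0)
        have "eval_fps (hadamard f h) 1 \<noteq> 0" if f: "f \<in> cm V" for f
        proof -
          obtain x f0 where f0: "f = Pop x f0" "f0 \<in> V" "x \<in> cball 0 1" using f unfolding cm_def by blast
          have "eval_fps (hadamard f h) 1 = eval_fps (hadamard f0 g) (x * complex_of_real r)"
            unfolding eval_fps_def f0(1) h_def by (simp add: power_mult_distrib mult_ac)
          moreover have "norm (x * complex_of_real r) < 1"
          proof -
            have "norm (x * complex_of_real r) = norm x * r" using r by (simp add: norm_mult)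
            also have "\<dots> \<le> r" using f0(3) r by (simp add: mult_left_le_one_le)
            finally show ?thesis using r by simp
          qed
          ultimately show ?thesis using gnz[OF f0(2)] by simp
        qed
        then show "h \<in> Tdual (cm V)" using hr h0 by (simp add: Tdual_def AD0_space_def AD_space_def)
      qed
    qed
  qed
next
  show "lu_closure (Tdual (cm V)) \<subseteq> dual V"
  proof
    fix g assume g: "g \<in> lu_closure (Tdual (cm V))"
    have gA: "fps_conv_radius g \<ge> 1" using g by (simp add: lu_closure_def A_space_def)
    have appr: "\<And>K e. compact K \<Longrightarrow> K \<subseteq> ball 0 1 \<Longrightarrow> e > 0 \<Longrightarrow>
        \<exists>h\<in>Tdual (cm V). \<forall>z\<in>K. norm (eval_fps h z - eval_fps g z) < e"
      using g unfolding lu_closure_def by blast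
    have g0: "fps_nth g 0 = 1"
    proof (rule ccontr)
      assume ne: "fps_nth g 0 \<noteq> 1"
      then have "norm (1 - fps_nth g 0) > 0" by simp
      from appr[of "{0}", OF _ _ this] obtain h where h: "h \<in> Tdual (cm V)"
        "norm (eval_fps h 0 - eval_fps g 0) < norm (1 - fps_nth g 0)" by auto
      then show False using Tdual_prop(2)[OF h(1)] by (simp add: eval_fps_at_0)
    qed
    have "\<forall>n. \<exists>h. h \<in> Tdual (cm V) \<and> (\<forall>z\<in>cball 0 (1 - 1/(real n+2)).
              norm (eval_fps h z - eval_fps g z) < 1/(real n+1))"
    proof
      fix n
      have "1/(real n+2) > 0" by simp
      have "cball (0::complex) (1 - 1/(real n+2)) \<subseteq> ball 0 1"
      proof (rule subsetI)
        fix x :: complex assume "x \<in> cball 0 (1 - 1/(real n+2))"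
        then have "norm x \<le> 1 - 1/(real n+2)" by simp
        then have "norm x < 1" using \<open>1/(real n+2) > 0\<close> by linarith
        then show "x \<in> ball 0 1" by simp
      qed
      from appr[OF compact_cball this, of "1/(real n+1)"] show "\<exists>h. h \<in> Tdual (cm V) \<and> (\<forall>z\<in>cball 0 (1 - 1/(real n+2)).
              norm (eval_fps h z - eval_fps g z) < 1/(real n+1))" by auto
    qed
    then obtain H where H: "\<And>n. H n \<in> Tdual (cm V)"
      "\<And>n z. z \<in> cball 0 (1 - 1/(real n+2)) \<Longrightarrow> norm (eval_fps (H n) z - eval_fps g z) < 1/(real n+1)"
      by metis
    have rH: "\<And>n. fps_conv_radius (H n) \<ge> 1" using Tdual_prop(1)[OF H(1)] by blast
    have "eval_fps (hadamard f g) z \<noteq> 0" if f: "f \<in> V" and z: "z \<in> ball 0 1" for f z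
    proof -
      have rf: "fps_conv_radius f \<ge> 1" and f0: "fps_nth f 0 = 1"
        using f assms by (auto simp: A0_space_def A_space_def)
      have holo: "eval_fps (hadamard f k) holomorphic_on ball 0 1" if "fps_conv_radius k \<ge> 1" for k
      proof (rule holomorphic_on_eval_fps, rule subsetI)
        fix x :: complex assume "x \<in> ball 0 1"
        then have "ereal (norm x) < 1" by simp
        then have "ereal (norm x) < fps_conv_radius (hadamard f k)"
          using less_le_trans[OF _ hadamard_radius[OF rf that]] by blast
        then show "x \<in> eball 0 (fps_conv_radius (hadamard f k))" by simp
      qed
      show ?thesis
      proof (cases "eval_fps (hadamard f g) constant_on ball 0 1")
        case True
        then obtain c where c: "\<And>w. w \<in> ball 0 1 \<Longrightarrow> eval_fps (hadamard f g) w = c"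
          unfolding constant_on_def by blast
        have "c = eval_fps (hadamard f g) 0" using c[of 0] by simp
        also have "\<dots> = 1" by (simp add: eval_fps_at_0 f0 g0)
        finally show ?thesis using c[OF z] by simp
      next
        case False
        show ?thesis
        proof (rule Hurwitz_no_zeros[of "ball 0 1" "\<lambda>n. eval_fps (hadamard f (H n))" "eval_fps (hadamard f g)" z])
          show "\<And>n. eval_fps (hadamard f (H n)) holomorphic_on ball 0 1" by (rule holo[OF rH])
          show "eval_fps (hadamard f g) holomorphic_on ball 0 1" by (rule holo[OF gA])
          show "\<And>K. compact K \<Longrightarrow> K \<subseteq> ball 0 1 \<Longrightarrow>
              uniform_limit K (\<lambda>n. eval_fps (hadamard f (H n))) (eval_fps (hadamard f g)) sequentially"
            by (rule unif_conv[OF rf gA rH H(2)])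
          show "\<And>n w. w \<in> ball 0 1 \<Longrightarrow> eval_fps (hadamard f (H n)) w \<noteq> 0"
            using Tdual_prop(3)[OF H(1) f] by blast
        qed (use False z in auto)
      qed
    qed
    then show "g \<in> dual V" using gA g0 by (simp add: dual_def A0_space_def A_space_def)
  qed
qed
end
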